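(* Let $S$ be a Hausdorff countably compact semitopological semigroup which is an orthogonal sum $S=\sum_{i\in\mathscr I}B^0_{\lambda_i}(S_i)$ of topological Brandt $\lambda_i^0$-extensions of semitopological monoids $S_i$ with zeros. Then for every open neighbourhood $U(0)$ of the zero $0$ of $S$ the set of triples $(i,\alpha_i,\beta_i)$ with $i\in\mathscr I$, $\alpha_i,\beta_i\in\lambda_i$ and $(S_i)_{\alpha_i,\beta_i}\not\subseteq U(0)$ is finite. Moreover, for every $i\in\mathscr I$ the subspace $B^0_{\lambda_i}(S_i)$ of $S$ is countably compact.
   Context: All spaces are Hausdorff; a semitopological semigroup is a Hausdorff space with separately continuous associative operation. For a semigroup $T$ with zero $0_T$ and a cardinal $\lambda\ge1$, $B^0_\lambda(T)=(\lambda\times (T\setminus\{0_T\})\times\lambda)\cup\{0\}$ with $(\alpha,a,\beta)(\gamma,b,\delta)=(\alpha,ab,\delta)$ if $\beta=\gamma$ and $ab\ne0_T$, and $0$ otherwise, $0$ a zero. For $A\subseteq T$, $A_{\alpha,\beta}=\{(\alpha,s,\beta):s\in A\setminus\{0_T\}\}\cup\{0\}$ if $0_T\in A$ and $\{(\alpha,s,\beta):s\in A\}$ otherwise. A topological Brandt $\lambda^0$-extension of a semitopological monoid $T$ with zero is $B^0_\lambda(T)$ with a topology making it a semitopological semigroup such that for some $\alpha\in\lambda$ the map $s\mapsto(\alpha,s,\alpha)$ ($0_T\mapsto0$) is a homeomorphism $T\to T_{\alpha,\alpha}$. The orthogonal sum of semigroups $T_\iota$ with zeros is $\{0\}\cup\bigcup_\iota(T_\iota\setminus\{0_\iota\})$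 with products computed in $T_\iota$ when both factors lie in the same $T_\iota$ and the product is non-zero, and $0$ otherwise. *)

theory Defs
  imports "HOL-Analysis.Analysis"
begin

definition countably_compact_space :: "'a topology \<Rightarrow> bool" where
  "countably_compact_space X \<longleftrightarrow>
     (\<forall>\<U>. countable \<U> \<and> (\<forall>U\<in>\<U>. openin X U) \<and> topspace X \<subseteq> \<Union>\<U> \<longrightarrow>
        (\<exists>\<F>. finite \<F> \<and> \<F> \<subseteq> \<U> \<and> topspace X \<subseteq> \<Union>\<F>))"

definition semitop_semigroup :: "'a topology \<Rightarrow> ('a \<Rightarrow> 'a \<Rightarrow> 'a) \<Rightarrow> bool" where
  "semitop_semigroup X f \<longleftrightarrow>
     Hausdorff_space X \<and>
     (\<forall>x\<in>topspace X. \<forall>y\<in>topspace X. f x y \<in> topspace X) \<and>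
     (\<forall>x\<in>topspace X. \<forall>y\<in>topspace X. \<forall>z\<in>topspace X. f (f x y) z = f x (f y z)) \<and>
     (\<forall>a\<in>topspace X. continuous_map X X (\<lambda>x. f a x) \<and> continuous_map X X (\<lambda>x. f x a))"

definition semitop_monoid_zero :: "'a topology \<Rightarrow> ('a \<Rightarrow> 'a \<Rightarrow> 'a) \<Rightarrow> 'a \<Rightarrow> 'a \<Rightarrow> bool" where
  "semitop_monoid_zero X f e z \<longleftrightarrow>
     semitop_semigroup X f \<and> e \<in> topspace X \<and> z \<in> topspace X \<and>
     (\<forall>x\<in>topspace X. f e x = x \<and> f x e = x \<and> f z x = z \<and> f x z = z)"

text \<open>Elements of the orthogonal sum of Brandt extensions: None is the zero 0,
Some (i, \<alpha>, s, \<beta>) is the element (\<alpha>, s, \<beta>) of the i-th summand.\<close>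
type_synonym ('i, 'c, 'a) belt = "('i \<times> 'c \<times> 'a \<times> 'c) option"

definition osum_carrier ::
  "'i set \<Rightarrow> ('i \<Rightarrow> 'c set) \<Rightarrow> ('i \<Rightarrow> 'a set) \<Rightarrow> ('i \<Rightarrow> 'a) \<Rightarrow> ('i, 'c, 'a) belt set" where
  "osum_carrier I L T z =
     insert None {Some (i, \<alpha>, s, \<beta>) | i \<alpha> s \<beta>. i \<in> I \<and> \<alpha> \<in> L i \<and> \<beta> \<in> L i \<and> s \<in> T i - {z i}}"

definition brandt_part ::
  "('i \<Rightarrow> 'c set) \<Rightarrow> ('i \<Rightarrow> 'a set) \<Rightarrow> ('i \<Rightarrow> 'a) \<Rightarrow> 'i \<Rightarrow> ('i, 'c, 'a) belt set" where
  "brandt_part L T z i =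
     insert None {Some (i, \<alpha>, s, \<beta>) | \<alpha> s \<beta>. \<alpha> \<in> L i \<and> \<beta> \<in> L i \<and> s \<in> T i - {z i}}"

text \<open>The set (S_i)_{\<alpha>,\<beta>} (S_i contains its zero, so 0 is included).\<close>
definition brandt_cell ::
  "('i \<Rightarrow> 'a set) \<Rightarrow> ('i \<Rightarrow> 'a) \<Rightarrow> 'i \<Rightarrow> 'c \<Rightarrow> 'c \<Rightarrow> ('i, 'c, 'a) belt set" where
  "brandt_cell T z i \<alpha> \<beta> = insert None {Some (i, \<alpha>, s, \<beta>) | s. s \<in> T i - {z i}}"

fun osum_mult ::
  "('i \<Rightarrow> 'a \<Rightarrow> 'a \<Rightarrow> 'a) \<Rightarrow> ('i \<Rightarrow> 'a) \<Rightarrow> ('i, 'c, 'a) belt \<Rightarrow> ('i, 'c, 'a) belt \<Rightarrow> ('i, 'c, 'a) belt" where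
  "osum_mult m z (Some (i, \<alpha>, a, \<beta>)) (Some (j, \<gamma>, b, \<delta>)) =
     (if i = j \<and> \<beta> = \<gamma> \<and> m i a b \<noteq> z i then Some (i, \<alpha>, m i a b, \<delta>) else None)"
| "osum_mult m z _ _ = None"

definition diag_emb :: "('i \<Rightarrow> 'a) \<Rightarrow> 'i \<Rightarrow> 'c \<Rightarrow> 'a \<Rightarrow> ('i, 'c, 'a) belt" where
  "diag_emb z i \<alpha> s = (if s = z i then None else Some (i, \<alpha>, s, \<alpha>))"

end

theory Submission
  imports Defs
begin

lemma cc_finite:
  assumes cc: "countably_compact_space X" and cA: "countable A" and sub: "A \<subseteq> topspace X"
    and loc: "\<And>y. y \<in> topspace X \<Longrightarrow> \<exists>W. openin X W \<and> y \<in> W \<and> finite (W \<inter> A)"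
  shows "finite A"
proof -
  define Ob where "Ob F = \<Union>{W. openin X W \<and> W \<inter> A \<subseteq> F}" for F
  define \<U> where "\<U> = Ob ` {F. finite F \<and> F \<subseteq> A}"
  have c1: "countable \<U>" unfolding \<U>_def using countable_Collect_finite_subset[OF cA] by (rule countable_image)
  have c2: "\<forall>U\<in>\<U>. openin X U" unfolding \<U>_def Ob_def by (intro ballI, clarify, rule openin_Union) blast
  have c3: "topspace X \<subseteq> \<Union>\<U>"
  proof
    fix y assume y: "y \<in> topspace X"
    then obtain W where W: "openin X W" "y \<in> W" "finite (W \<inter> A)" using loc by blast
    then have y1: "y \<in> Ob (W \<inter> A)" unfolding Ob_def by blast
    have y2: "Ob (W \<inter> A) \<in> \<U>" using W unfolding \<U>_def by blast
    show "y \<in> \<Union>\<U>" using UnionI[OF y2 y1] .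
  qed
  have "\<exists>\<F>. finite \<F> \<and> \<F> \<subseteq> \<U> \<and> topspace X \<subseteq> \<Union>\<F>"
    using cc[unfolded countably_compact_space_def, rule_format, OF conjI[OF c1 conjI[OF c2 c3]]] .
  then obtain \<F> where F: "finite \<F>" "\<F> \<subseteq> \<U>" "topspace X \<subseteq> \<Union>\<F>" by blast
  have A: "A \<subseteq> \<Union>((\<lambda>G. G \<inter> A) ` \<F>)" using sub F(3) by blast
  have "\<forall>G\<in>\<F>. finite (G \<inter> A)"
  proof
    fix G assume "G \<in> \<F>"
    then obtain Fs where G: "G = Ob Fs" "finite Fs" using F(2) unfolding \<U>_def by blast
    moreover have "Ob Fs \<inter> A \<subseteq> Fs" unfolding Ob_def by blast
    ultimately show "finite (G \<inter> A)" using finite_subset by blast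
  qed
  then have "finite (\<Union>((\<lambda>G. G \<inter> A) ` \<F>))" using F(1) by blast
  then show ?thesis using A finite_subset by blast
qed

lemma cc_closed:
  assumes cc: "countably_compact_space X" and cl: "closedin X S"
  shows "countably_compact_space (subtopology X S)"
  unfolding countably_compact_space_def
proof (intro allI impI)
  fix \<U> assume H: "countable \<U> \<and> (\<forall>U\<in>\<U>. openin (subtopology X S) U) \<and> topspace (subtopology X S) \<subseteq> \<Union>\<U>"
  have "\<forall>U\<in>\<U>. \<exists>V. openin X V \<and> U = S \<inter> V" using H by (auto simp: openin_subtopology Int_commute)
  then obtain V where V: "\<forall>U\<in>\<U>. openin X (V U) \<and> U = S \<inter> V U" by metis
  have Ssub: "S \<subseteq> topspace X" using cl closedin_subset by blast
  define \<V> where "\<V> = insert (topspace X - S) (V ` \<U>)"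
  have c1: "countable \<V>" using H by (simp add: \<V>_def)
  have c2: "\<forall>W\<in>\<V>. openin X W" using V cl by (auto simp: \<V>_def closedin_def)
  have c3: "topspace X \<subseteq> \<Union>\<V>"
  proof
    fix x assume x: "x \<in> topspace X"
    show "x \<in> \<Union>\<V>"
    proof (cases "x \<in> S")
      case True
      then obtain U where "U \<in> \<U>" "x \<in> U" using H x by auto
      then show ?thesis using V by (auto simp: \<V>_def)
    qed (use x in \<open>auto simp: \<V>_def\<close>)
  qed
  have "\<exists>\<F>. finite \<F> \<and> \<F> \<subseteq> \<V> \<and> topspace X \<subseteq> \<Union>\<F>"
    using cc[unfolded countably_compact_space_def, rule_format, OF conjI[OF c1 conjI[OF c2 c3]]] .
  then obtain \<F> where F: "finite \<F>" "\<F> \<subseteq> \<V>" "topspace X \<subseteq> \<Union>\<F>" by blast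
  define \<F>' where "\<F>' = (\<lambda>W. S \<inter> W) ` (\<F> - {topspace X - S})"
  have "finite \<F>'" using F by (simp add: \<F>'_def)
  moreover have "\<F>' \<subseteq> \<U>"
  proof
    fix G assume "G \<in> \<F>'"
    then obtain W where "W \<in> \<F>" "W \<noteq> topspace X - S" "G = S \<inter> W" by (auto simp: \<F>'_def)
    then obtain U where "U \<in> \<U>" "W = V U" using F(2) by (auto simp: \<V>_def)
    then show "G \<in> \<U>" using V \<open>G = S \<inter> W\<close> by auto
  qed
  moreover have "topspace (subtopology X S) \<subseteq> \<Union>\<F>'"
  proof
    fix x assume "x \<in> topspace (subtopology X S)"
    then have x: "x \<in> S" "x \<in> topspace X" by auto
    then obtain W where "W \<in> \<F>" "x \<in> W" using F(3) by blast
    then show "x \<in> \<Union>\<F>'" using x by (auto simp: \<F>'_def)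
  qed
  ultimately show "\<exists>\<F>. finite \<F> \<and> \<F> \<subseteq> \<U> \<and> topspace (subtopology X S) \<subseteq> \<Union>\<F>" by blast
qed

lemma open_nonNone:
  assumes "Hausdorff_space X" "None \<in> topspace X" "continuous_map X X g"
  shows "openin X {y\<in>topspace X. g y \<noteq> None}"
proof -
  have "closedin X {None}" using assms(1,2) Hausdorff_imp_t1_space t1_space_closedin_singleton by metis
  then have "openin X (topspace X - {None})" by (simp add: openin_diff)
  then have "openin X {y\<in>topspace X. g y \<in> topspace X - {None}}"
    using openin_continuous_map_preimage assms(3) by blast
  moreover have "{y\<in>topspace X. g y \<in> topspace X - {None}} = {y\<in>topspace X. g y \<noteq> None}"
    using assms(3) by (auto simp: continuous_map_def)
  ultimately show ?thesis by simp
qed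

lemma in_osum: "Some (j,a,s,b) \<in> osum_carrier I L T z \<longleftrightarrow> j\<in>I \<and> a\<in>L j \<and> b \<in> L j \<and> s \<in> T j \<and> s \<noteq> z j"
  by (auto simp: osum_carrier_def)

lemma None_osum: "None \<in> osum_carrier I L T z"
  by (auto simp: osum_carrier_def)

lemma left_mult_shape:
  "osum_mult m z (Some (j,g,u,g)) x \<noteq> None \<Longrightarrow> \<exists>s b. x = Some (j,g,s,b)"
  by (cases x) (auto split: if_splits)

lemma two_mult_shape:
  "osum_mult m z (osum_mult m z (Some (j,g,u,g)) x) (Some (j,d,v,d)) \<noteq> None \<Longrightarrow> \<exists>s. x = Some (j,g,s,d)"
  apply (cases x)
   apply (auto split: if_splits)
  done

fun proj :: "('i, 'c, 'a) belt \<Rightarrow> 'i \<times> 'c \<times> 'c" where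
  "proj (Some (i,a,s,b)) = (i,a,b)"
| "proj None = undefined"

theorem proposition2p4:
  fixes I :: "'i set"
    and L :: "'i \<Rightarrow> 'c set"
    and tau :: "'i \<Rightarrow> 'a topology"
    and m :: "'i \<Rightarrow> 'a \<Rightarrow> 'a \<Rightarrow> 'a"
    and e z :: "'i \<Rightarrow> 'a"
    and X :: "('i, 'c, 'a) belt topology"
  assumes monoids: "\<forall>i\<in>I. semitop_monoid_zero (tau i) (m i) (e i) (z i)"
    and lambda_nonempty: "\<forall>i\<in>I. L i \<noteq> {}"
    and carrier: "topspace X = osum_carrier I L (\<lambda>i. topspace (tau i)) z"
    and semitop: "semitop_semigroup X (osum_mult m z)"
    and brandt: "\<forall>i\<in>I. semitop_semigroup
                         (subtopology X (brandt_part L (\<lambda>i. topspace (tau i)) z i)) (osum_mult m z)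
                    \<and> (\<exists>\<alpha>\<in>L i. homeomorphic_map (tau i)
                         (subtopology X (brandt_cell (\<lambda>i. topspace (tau i)) z i \<alpha> \<alpha>))
                         (diag_emb z i \<alpha>))"
    and ccompact: "countably_compact_space X"
  shows "(\<forall>U. openin X U \<and> None \<in> U \<longrightarrow>
            finite {(i, \<alpha>, \<beta>). i \<in> I \<and> \<alpha> \<in> L i \<and> \<beta> \<in> L i \<and>
                      \<not> brandt_cell (\<lambda>i. topspace (tau i)) z i \<alpha> \<beta> \<subseteq> U})
         \<and> (\<forall>i\<in>I. countably_compact_space
                     (subtopology X (brandt_part L (\<lambda>i. topspace (tau i)) z i)))"
proof -
  define T where "T = (\<lambda>i. topspace (tau i))"
  define f :: "(_, 'c, _) belt \<Rightarrow> _" where "f = osum_mult m z"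
  have haus: "Hausdorff_space X" using semitop by (simp add: semitop_semigroup_def)
  have Nn: "None \<in> topspace X" using carrier by (simp add: None_osum)
  have cont: "\<And>a. a \<in> topspace X \<Longrightarrow> continuous_map X X (f a) \<and> continuous_map X X (\<lambda>x. f x a)"
    using semitop by (simp add: semitop_semigroup_def f_def)
  have mon: "\<And>j t. j \<in> I \<Longrightarrow> t \<in> T j \<Longrightarrow> e j \<in> T j \<and> m j (e j) t = t \<and> m j t (e j) = t \<and> m j (z j) t = z j"
    using monoids by (simp add: semitop_monoid_zero_def T_def)
  have eT: "\<And>j t. j \<in> I \<Longrightarrow> t \<in> T j \<Longrightarrow> t \<noteq> z j \<Longrightarrow> e j \<noteq> z j"
    using mon by metis
  have inX: "\<And>j a s b. Some (j,a,s,b) \<in> topspace X \<longleftrightarrow> j\<in>I \<and> a\<in>L j \<and> b \<in> L j \<and> s \<in> T j \<and> s \<noteq> z j"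
    using carrier by (simp add: in_osum T_def)
  have part1: "finite {(i, \<alpha>, \<beta>). i \<in> I \<and> \<alpha> \<in> L i \<and> \<beta> \<in> L i \<and>
                      \<not> brandt_cell T z i \<alpha> \<beta> \<subseteq> U}" if U: "openin X U" "None \<in> U" for U
  proof (rule ccontr)
    define B where "B = {(i, \<alpha>, \<beta>). i \<in> I \<and> \<alpha> \<in> L i \<and> \<beta> \<in> L i \<and>
                      \<not> brandt_cell T z i \<alpha> \<beta> \<subseteq> U}"
    assume "infinite {(i, \<alpha>, \<beta>). i \<in> I \<and> \<alpha> \<in> L i \<and> \<beta> \<in> L i \<and>
                      \<not> brandt_cell T z i \<alpha> \<beta> \<subseteq> U}"
    then have "infinite B" by (simp add: B_def)
    then obtain g :: "nat \<Rightarrow> _" where g: "inj g" "range g \<subseteq> B" using infinite_countable_subset by blast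
    have "\<forall>t\<in>B. \<exists>x\<in>topspace X - U. proj x = t"
    proof
      fix t assume "t \<in> B"
      then obtain i a b where t: "t = (i,a,b)" "i \<in> I" "a \<in> L i" "b \<in> L i"
        "\<not> brandt_cell T z i a b \<subseteq> U" by (auto simp: B_def)
      then obtain x where x: "x \<in> brandt_cell T z i a b" "x \<notin> U" by blast
      then obtain s where "x = Some (i,a,s,b)" "s \<in> T i" "s \<noteq> z i" using U(2)
        by (auto simp: brandt_cell_def)
      moreover have "x \<in> topspace X" using \<open>x = Some (i,a,s,b)\<close> \<open>s \<in> T i\<close> \<open>s \<noteq> z i\<close> t inX by simp
      ultimately show "\<exists>x\<in>topspace X - U. proj x = t" using x(2) t(1) by (intro bexI[of _ x]) auto
    qed
    then obtain p where p: "\<forall>t\<in>B. p t \<in> topspace X - U \<and> proj (p t) = t" by metis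
    define A where "A = range (p \<circ> g)"
    have pg: "\<And>n. p (g n) \<in> topspace X - U \<and> proj (p (g n)) = g n" using p g by auto
    have "finite A"
    proof (rule cc_finite[OF ccompact])
      show "countable A" by (simp add: A_def)
      show "A \<subseteq> topspace X" using pg by (auto simp: A_def)
    next
      fix y assume y: "y \<in> topspace X"
      show "\<exists>W. openin X W \<and> y \<in> W \<and> finite (W \<inter> A)"
      proof (cases y)
        case None
        have "U \<inter> A = {}" using pg by (auto simp: A_def)
        then show ?thesis using U None by (intro exI[of _ U]) auto
      next
        case (Some y')
        then obtain j c t d where yy: "y = Some (j,c,t,d)" by (metis prod_cases4)
        then have jj: "j\<in>I" "c\<in>L j" "d \<in> L j" "t \<in> T j" "t \<noteq> z j" using y inX by auto
        have ej: "e j \<in> T j" "e j \<noteq> z j" using mon eT jj by auto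
        define a where "a = Some (j,c,e j,c)"
        define b where "b = Some (j,d,e j,d)"
        have ab: "a \<in> topspace X" "b \<in> topspace X" using ej jj inX by (auto simp: a_def b_def)
        define W where "W = {x\<in>topspace X. f (f a x) b \<noteq> None}"
        have "continuous_map X X (\<lambda>x. f (f a x) b)"
          using cont ab continuous_map_compose[of X X "f a" X "\<lambda>x. f x b"] by (auto simp: o_def)
        then have oW: "openin X W" unfolding W_def using open_nonNone[OF haus Nn] by blast
        have "f (f a y) b = y" using jj mon ej by (simp add: yy a_def b_def f_def)
        then have yW: "y \<in> W" using y yy by (simp add: W_def)
        have "W \<inter> A \<subseteq> (p \<circ> g) ` {n. g n = (j,c,d)}"
        proof
          fix x assume x: "x \<in> W \<inter> A"
          then obtain n where n: "x = p (g n)" by (auto simp: A_def)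
          from x have "f (f a x) b \<noteq> None" by (simp add: W_def)
          then obtain s where "x = Some (j,c,s,d)" unfolding a_def b_def f_def using two_mult_shape by metis
          then have "g n = (j,c,d)" using pg[of n] n by simp
          then show "x \<in> (p \<circ> g) ` {n. g n = (j,c,d)}" using n by auto
        qed
        moreover have "finite {n. g n = (j,c,d)}"
          using finite_vimageI[OF _ g(1), of "{(j,c,d)}"] by (simp add: vimage_def)
        ultimately have "finite (W \<inter> A)" by (meson finite_imageI finite_subset)
        then show ?thesis using oW yW by blast
      qed
    qed
    then have "finite (proj ` A)" by simp
    moreover have "proj ` A = range g" using pg by (auto simp: A_def image_iff)
    ultimately show False using g(1) finite_imageD by (metis finite_UNIV infinite_UNIV_nat inj_on_subset subset_UNIV)
  qed
  have part2: "countably_compact_space (subtopology X (brandt_part L T z i))" if i: "i \<in> I" for i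
  proof (rule cc_closed[OF ccompact])
    let ?S = "brandt_part L T z i"
    have Ssub: "?S \<subseteq> topspace X" using i inX Nn by (auto simp: brandt_part_def)
    have "openin X (topspace X - ?S)"
    proof (subst openin_subopen, intro ballI)
      fix x assume x: "x \<in> topspace X - ?S"
      then obtain j c s d where xx: "x = Some (j,c,s,d)" using Nn
        by (cases x) (auto simp: brandt_part_def)
      then have jj: "j\<in>I" "c\<in>L j" "d \<in> L j" "s \<in> T j" "s \<noteq> z j" using x inX by auto
      have ji: "j \<noteq> i" using x jj by (auto simp: xx brandt_part_def)
      have ej: "e j \<in> T j" "e j \<noteq> z j" using mon eT jj by auto
      define a where "a = Some (j,c,e j,c)"
      have aX: "a \<in> topspace X" using ej jj inX by (auto simp: a_def)
      define W where "W = {y\<in>topspace X. f a y \<noteq> None}"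
      have oW: "openin X W" unfolding W_def using open_nonNone[OF haus Nn] cont[OF aX] by blast
      have "f a x = x" using jj mon ej by (simp add: xx a_def f_def)
      then have xW: "x \<in> W" using x xx by (simp add: W_def)
      have "W \<subseteq> topspace X - ?S"
      proof
        fix y assume y: "y \<in> W"
        then have "f a y \<noteq> None" "y \<in> topspace X" by (auto simp: W_def)
        then obtain s' b' where "y = Some (j,c,s',b')" unfolding a_def f_def using left_mult_shape by metis
        then show "y \<in> topspace X - ?S" using ji \<open>y \<in> topspace X\<close> by (auto simp: brandt_part_def)
      qed
      then show "\<exists>W. openin X W \<and> x \<in> W \<and> W \<subseteq> topspace X - ?S" using oW xW by blast
    qed
    then show "closedin X ?S" using Ssub by (simp add: closedin_def)
  qed
  show ?thesis using part1 part2 by (simp add: T_def)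
qed

end
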